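(* Let $\mathcal{M}$ be a deterministic MDP with $|\mathcal{S}\times\mathcal{A}|<\infty$, and let $\mathcal{D}$ be an offline dataset of transitions such that $N(s,a,\mathcal{T}(s,a))\ge1$ for every $(s,a)\in\mathcal{S}\times\mathcal{A}$. Then DiSPOs trained on $\mathcal{D}$ are guaranteed to identify an optimal policy (for any reward $r(s)=w_r^\top\phi(s)$ linear in the features).
   Context: $\mathcal{M}$ has state space $\mathcal{S}$, action space $\mathcal{A}$, deterministic transition $\mathcal{T}:\mathcal{S}\times\mathcal{A}\to\mathcal{S}$, discount $\gamma\in(0,1)$, and reward $r(s)=w_r^\top\phi(s)$ for a feature map $\phi:\mathcal{S}\to\mathbb{R}^d$. $N(s,a,s')$ denotes the number of occurrences of the transition $(s,a,s')$ in the dataset $\mathcal{D}$. A DiSPO consists of (1) an outcome model $p(\psi\mid s)$, the distribution of successor features $\psi=\sum_{t\ge1}\gamma^{t-1}\phi(s_t)$ over trajectories starting at $s_1=s$ that are covered by the dataset (learned by the fixed point of the distributional Bellman update: $p(\cdot\mid s)$ maximizes the likelihood of $\phi(s)+\gamma\psi_{s'}$ with $(s,a,s')\in\mathcal{D}$, $\psi_{s'}\sim p(\cdot\mid s')$), and (2) a readout policy $\pi(a\mid s,\psi)$ which outputs an action $a$ at $s$ whose dataset transition $(s,a,s')$ realizes the outcome $\psi=\phi(s)+\gamma\psi_{s'}$ with $\psi_{s'}$ in the support of $p(\cdot\mid s')$. The DiSPO policy at state $s$ selects $\psi^*\in\arg\max_\psi w_r^\top\psi$ subject to $p(\psi\mid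 s)>0$ and takes the action $a\sim\pi(a\mid s,\psi^* )$. *)

theory Defs
  imports "HOL-Analysis.Analysis"
begin

text \<open>Deterministic MDP with transition T :: 's => 'a => 's, feature map
phi :: 's => real^'d, discount gamma, and dataset counts N s a s'.
States are indexed from 0 here (s_0 = s corresponds to s_1 in the paper).\<close>

primrec traj :: "('s \<Rightarrow> 'a \<Rightarrow> 's) \<Rightarrow> 's \<Rightarrow> (nat \<Rightarrow> 'a) \<Rightarrow> nat \<Rightarrow> 's" where
  "traj T s as 0 = s"
| "traj T s as (Suc t) = T (traj T s as t) (as t)"

definition succ_feat ::
  "('s \<Rightarrow> 'a \<Rightarrow> 's) \<Rightarrow> ('s \<Rightarrow> real^'d) \<Rightarrow> real \<Rightarrow> 's \<Rightarrow> (nat \<Rightarrow> 'a) \<Rightarrow> real^'d" where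
  "succ_feat T phi \<gamma> s as = (\<Sum>t. (\<gamma> ^ t) *\<^sub>R phi (traj T s as t))"

definition covered ::
  "('s \<Rightarrow> 'a \<Rightarrow> 's \<Rightarrow> nat) \<Rightarrow> ('s \<Rightarrow> 'a \<Rightarrow> 's) \<Rightarrow> 's \<Rightarrow> (nat \<Rightarrow> 'a) \<Rightarrow> bool" where
  "covered N T s as \<longleftrightarrow> (\<forall>t. N (traj T s as t) (as t) (traj T s as (Suc t)) \<ge> 1)"

text \<open>Support of the DiSPO outcome model p(psi | s): successor features of dataset-covered
trajectories starting at s.\<close>
definition outcome_support ::
  "('s \<Rightarrow> 'a \<Rightarrow> 's \<Rightarrow> nat) \<Rightarrow> ('s \<Rightarrow> 'a \<Rightarrow> 's) \<Rightarrow> ('s \<Rightarrow> real^'d) \<Rightarrow> real \<Rightarrow> 's \<Rightarrow> (real^'d) set" where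
  "outcome_support N T phi \<gamma> s = {succ_feat T phi \<gamma> s as | as. covered N T s as}"

text \<open>a is an action the DiSPO policy may take at s: some psi* maximizing w^T psi over the
support of p(. | s) is realized by a dataset transition (s,a,s'), i.e.
psi* = phi s + gamma psi' with psi' in the support of p(. | s').\<close>
definition dispo_action ::
  "('s \<Rightarrow> 'a \<Rightarrow> 's \<Rightarrow> nat) \<Rightarrow> ('s \<Rightarrow> 'a \<Rightarrow> 's) \<Rightarrow> ('s \<Rightarrow> real^'d) \<Rightarrow> real \<Rightarrow> real^'d \<Rightarrow> 's \<Rightarrow> 'a \<Rightarrow> bool" where
  "dispo_action N T phi \<gamma> w s a \<longleftrightarrow>
     (\<exists>\<psi>\<in>outcome_support N T phi \<gamma> s.
        (\<forall>\<psi>'\<in>outcome_support N T phi \<gamma> s. w \<bullet> \<psi>' \<le> w \<bullet> \<psi>) \<and>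
        (\<exists>s'. N s a s' \<ge> 1 \<and> (\<exists>\<psi>'\<in>outcome_support N T phi \<gamma> s'. \<psi> = phi s + \<gamma> *\<^sub>R \<psi>')))"

definition disc_return ::
  "('s \<Rightarrow> 'a \<Rightarrow> 's) \<Rightarrow> ('s \<Rightarrow> real) \<Rightarrow> real \<Rightarrow> 's \<Rightarrow> (nat \<Rightarrow> 'a) \<Rightarrow> real" where
  "disc_return T r \<gamma> s as = (\<Sum>t. \<gamma> ^ t * r (traj T s as t))"

definition opt_value ::
  "('s \<Rightarrow> 'a \<Rightarrow> 's) \<Rightarrow> ('s \<Rightarrow> real) \<Rightarrow> real \<Rightarrow> 's \<Rightarrow> real" where
  "opt_value T r \<gamma> s = (SUP as. disc_return T r \<gamma> s as)"

end

theory Submission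
  imports Defs
begin

lemma traj_shift: "traj T s as (Suc t) = traj T (T s (as 0)) (\<lambda>t. as (Suc t)) t"
  by (induction t) auto

lemma fin_bound:
  fixes h :: "'s::finite \<Rightarrow> 'v::real_normed_vector"
  shows "\<exists>C. \<forall>x. norm (h x) \<le> C"
proof -
  have "finite (range (\<lambda>x. norm (h x)))" by simp
  then show ?thesis by (intro exI[of _ "Max (range (\<lambda>x. norm (h x)))"]) auto
qed

lemma geo_summable:
  fixes f :: "nat \<Rightarrow> 'v::banach"
  assumes "\<And>t. norm (f t) \<le> C" "0 < \<gamma>" "\<gamma> < 1"
  shows "summable (\<lambda>t. \<gamma> ^ t *\<^sub>R f t)"
proof (rule summable_comparison_test')
  show "summable (\<lambda>t. C * \<gamma> ^ t)"
    using assms by (intro summable_mult summable_geometric) auto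
  fix n show "norm (\<gamma> ^ n *\<^sub>R f n) \<le> C * \<gamma> ^ n"
    using assms(1)[of n] assms(2) by (simp add: mult.commute mult_left_mono)
qed

lemma traj_summable:
  fixes h :: "'s::finite \<Rightarrow> 'v::banach"
  assumes "0 < \<gamma>" "\<gamma> < 1"
  shows "summable (\<lambda>t. \<gamma> ^ t *\<^sub>R h (traj T s as t))"
proof -
  obtain C where "\<forall>x. norm (h x) \<le> C" using fin_bound by blast
  then show ?thesis using assms by (intro geo_summable[where C=C]) auto
qed

lemma traj_split:
  fixes h :: "'s::finite \<Rightarrow> 'v::banach"
  assumes "0 < \<gamma>" "\<gamma> < 1"
  shows "(\<Sum>t. \<gamma> ^ t *\<^sub>R h (traj T s as t)) =
    h s + \<gamma> *\<^sub>R (\<Sum>t. \<gamma> ^ t *\<^sub>R h (traj T (T s (as 0)) (\<lambda>t. as (Suc t)) t))"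
proof -
  let ?f = "\<lambda>t. \<gamma> ^ t *\<^sub>R h (traj T s as t)"
  let ?g = "\<lambda>t. \<gamma> ^ t *\<^sub>R h (traj T (T s (as 0)) (\<lambda>t. as (Suc t)) t)"
  have sf: "summable ?f" "summable ?g" using traj_summable assms by blast+
  have "(\<Sum>t. ?f (Suc t)) = suminf ?f - ?f 0" using suminf_split_head[OF sf(1)] .
  moreover have "(\<lambda>t. ?f (Suc t)) = (\<lambda>t. \<gamma> *\<^sub>R ?g t)"
    using traj_shift[of T s as] by (simp del: traj.simps)
  moreover have "(\<Sum>t. \<gamma> *\<^sub>R ?g t) = \<gamma> *\<^sub>R suminf ?g"
    using bounded_linear.suminf[OF bounded_linear_scaleR_right sf(2)] by simp
  ultimately show ?thesis by (simp add: algebra_simps)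
qed

lemma disc_return_alt:
  "disc_return T r \<gamma> s as = (\<Sum>t. \<gamma> ^ t *\<^sub>R r (traj T s as t))"
  unfolding disc_return_def by simp

lemma inner_succ_feat:
  fixes T :: "'s::finite \<Rightarrow> 'a \<Rightarrow> 's" and phi :: "'s \<Rightarrow> real^'d"
  assumes "0 < \<gamma>" "\<gamma> < 1"
  shows "w \<bullet> succ_feat T phi \<gamma> s as = disc_return T (\<lambda>x. w \<bullet> phi x) \<gamma> s as"
proof -
  have "w \<bullet> succ_feat T phi \<gamma> s as = (\<Sum>t. w \<bullet> (\<gamma> ^ t *\<^sub>R phi (traj T s as t)))"
    unfolding succ_feat_def
    by (rule bounded_linear.suminf[OF bounded_linear_inner_right traj_summable[OF assms]])
  then show ?thesis unfolding disc_return_def by simp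
qed

lemma R_bound:
  fixes T :: "'s::finite \<Rightarrow> 'a \<Rightarrow> 's" and r :: "'s \<Rightarrow> real"
  assumes "0 < \<gamma>" "\<gamma> < 1"
  shows "\<exists>B. \<forall>s as. \<bar>disc_return T r \<gamma> s as\<bar> \<le> B"
proof -
  obtain C where C: "\<forall>x. norm (r x) \<le> C" using fin_bound by blast
  have sg: "summable (\<lambda>t. C * \<gamma> ^ t)"
    using assms by (intro summable_mult summable_geometric) auto
  have "\<bar>disc_return T r \<gamma> s as\<bar> \<le> (\<Sum>t. C * \<gamma> ^ t)" for s as
  proof -
    have sf: "summable (\<lambda>t. \<gamma> ^ t * r (traj T s as t))"
      using traj_summable[OF assms, of r T s as] by simp
    have b: "\<bar>\<gamma> ^ t * r (traj T s as t)\<bar> \<le> C * \<gamma> ^ t" for t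
      using C assms by (simp add: abs_mult mult.commute mult_left_mono)
    have "disc_return T r \<gamma> s as \<le> (\<Sum>t. C * \<gamma> ^ t)"
      unfolding disc_return_def using b by (intro suminf_le sf sg) (auto simp: abs_le_iff)
    moreover have "- disc_return T r \<gamma> s as \<le> (\<Sum>t. C * \<gamma> ^ t)"
    proof -
      have "(\<Sum>t. - (\<gamma> ^ t * r (traj T s as t))) \<le> (\<Sum>t. C * \<gamma> ^ t)"
        using b by (intro suminf_le summable_minus sf sg) (auto simp: abs_le_iff)
      then show ?thesis unfolding disc_return_def using suminf_minus[OF sf] by simp
    qed
    ultimately show ?thesis by linarith
  qed
  then show ?thesis by blast
qed


theorem theorem2:
  fixes T :: "'s::finite \<Rightarrow> 'a::finite \<Rightarrow> 's"
    and N :: "'s \<Rightarrow> 'a \<Rightarrow> 's \<Rightarrow> nat"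
    and phi :: "'s \<Rightarrow> real^'d"
    and \<gamma> :: real
    and w :: "real^'d"
  assumes "0 < \<gamma>" and "\<gamma> < 1"
    and data_from_mdp: "\<And>s a s'. N s a s' \<ge> 1 \<Longrightarrow> s' = T s a"
    and coverage: "\<And>s a. N s a (T s a) \<ge> 1"
  shows "(\<forall>s. \<exists>a. dispo_action N T phi \<gamma> w s a)
    \<and> (\<forall>s as. (\<forall>t. dispo_action N T phi \<gamma> w (traj T s as t) (as t)) \<longrightarrow>
         disc_return T (\<lambda>x. w \<bullet> phi x) \<gamma> s as = opt_value T (\<lambda>x. w \<bullet> phi x) \<gamma> s)"
proof -
  note g01 = assms(1,2)
  define r where "r = (\<lambda>x. w \<bullet> phi x)"
  define R where "R = disc_return T r \<gamma>"
  define V where "V = opt_value T r \<gamma>"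
  obtain B where B: "\<And>s as. \<bar>R s as\<bar> \<le> B"
    using R_bound[OF g01, of T r] unfolding R_def by blast
  have bdd: "bdd_above (range (R s))" for s
    using B by (intro bdd_aboveI[of _ B]) (auto simp: abs_le_iff)
  have Rle: "R s as \<le> V s" for s as
    unfolding V_def opt_value_def R_def[symmetric] by (rule cSUP_upper[OF _ bdd]) auto
  have Vle: "V s \<le> c" if "\<And>as. R s as \<le> c" for s c
    unfolding V_def opt_value_def R_def[symmetric] using that by (intro cSUP_least) auto
  have Vb: "\<bar>V s\<bar> \<le> B" for s
  proof -
    have "V s \<le> B" using B by (intro Vle) (auto simp: abs_le_iff)
    moreover have "- B \<le> V s" using B[of s undefined] Rle[of s undefined] by (auto simp: abs_le_iff)
    ultimately show ?thesis by auto
  qed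
  have split: "R s as = r s + \<gamma> * R (T s (as 0)) (\<lambda>t. as (Suc t))" for s as
    unfolding R_def disc_return_alt using traj_split[OF g01, of r T s as] by simp
  have bell1: "r s + \<gamma> * V (T s a) \<le> V s" for s a
  proof -
    have "V (T s a) \<le> (V s - r s) / \<gamma>"
    proof (rule Vle)
      fix as'
      let ?as = "case_nat a as'"
      have "R s ?as = r s + \<gamma> * R (T s a) as'" using split[of s ?as] by simp
      then have "r s + \<gamma> * R (T s a) as' \<le> V s" using Rle[of s ?as] by simp
      then show "R (T s a) as' \<le> (V s - r s) / \<gamma>" using g01
        by (simp add: pos_le_divide_eq mult.commute)
    qed
    then show ?thesis using g01 by (simp add: pos_le_divide_eq mult.commute)
  qed
  have bell2: "\<exists>a. V s = r s + \<gamma> * V (T s a)" for s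
  proof -
    let ?m = "Max (range (\<lambda>a. V (T s a)))"
    have "?m \<in> range (\<lambda>a. V (T s a))" by (intro Max_in) auto
    then obtain a where a: "?m = V (T s a)" by (metis (no_types, lifting) imageE)
    have amax: "V (T s b) \<le> V (T s a)" for b unfolding a[symmetric] by (intro Max_ge) auto
    have "V s \<le> r s + \<gamma> * V (T s a)"
    proof (rule Vle)
      fix as
      have "R s as = r s + \<gamma> * R (T s (as 0)) (\<lambda>t. as (Suc t))" by (rule split)
      also have "\<dots> \<le> r s + \<gamma> * V (T s a)"
        using Rle[of "T s (as 0)" "\<lambda>t. as (Suc t)"] amax[of "as 0"] g01
        by (simp add: mult_left_mono)
      finally show "R s as \<le> r s + \<gamma> * V (T s a)" .
    qed
    then show ?thesis using bell1[of s a] by auto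
  qed
  have opt: "R s as = V s"
    if hyp: "\<And>t. V (traj T s as t) = r (traj T s as t) + \<gamma> * V (traj T s as (Suc t))" for s as
  proof -
    have tel: "V s = (\<Sum>t<n. \<gamma> ^ t * r (traj T s as t)) + \<gamma> ^ n * V (traj T s as n)" for n
    proof (induction n)
      case 0 then show ?case by simp
    next
      case (Suc n)
      have "\<gamma> ^ n * V (traj T s as n) = \<gamma> ^ n * r (traj T s as n) + \<gamma> ^ Suc n * V (traj T s as (Suc n))"
        by (subst hyp) (simp add: algebra_simps del: traj.simps)
      with Suc show ?case by (simp del: traj.simps)
    qed
    have sf: "summable (\<lambda>t. \<gamma> ^ t * r (traj T s as t))"
      using traj_summable[OF g01, of r T s as] by simp
    have l1: "(\<lambda>n. \<Sum>t<n. \<gamma> ^ t * r (traj T s as t)) \<longlonglongrightarrow> R s as"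
      unfolding R_def disc_return_def by (rule summable_LIMSEQ[OF sf])
    have l2: "(\<lambda>n. \<gamma> ^ n * V (traj T s as n)) \<longlonglongrightarrow> 0"
    proof (rule Lim_null_comparison[OF always_eventually])
      show "\<forall>n. norm (\<gamma> ^ n * V (traj T s as n)) \<le> \<gamma> ^ n * B"
        using Vb g01 by (auto simp: abs_mult intro: mult_left_mono)
      have "(\<lambda>n. \<gamma> ^ n * B) \<longlonglongrightarrow> 0 * B"
        using g01 by (intro tendsto_mult LIMSEQ_power_zero tendsto_const) auto
      then show "(\<lambda>n. \<gamma> ^ n * B) \<longlonglongrightarrow> 0" by simp
    qed
    have "(\<lambda>n. V s) \<longlonglongrightarrow> R s as + 0"
    proof -
      have e: "(\<lambda>n. V s) = (\<lambda>n. (\<Sum>t<n. \<gamma> ^ t * r (traj T s as t)) + \<gamma> ^ n * V (traj T s as n))"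
        using tel by (intro ext) blast
      show ?thesis unfolding e by (intro tendsto_add l1 l2)
    qed
    then show ?thesis using LIMSEQ_unique[OF tendsto_const] by fastforce
  qed
  have supp: "outcome_support N T phi \<gamma> s = range (succ_feat T phi \<gamma> s)" for s
    unfolding outcome_support_def covered_def using coverage by auto
  have inn: "w \<bullet> succ_feat T phi \<gamma> s as = R s as" for s as
    unfolding R_def r_def by (rule inner_succ_feat[OF g01])
  have sfsplit: "succ_feat T phi \<gamma> s as = phi s + \<gamma> *\<^sub>R succ_feat T phi \<gamma> (T s (as 0)) (\<lambda>t. as (Suc t))" for s as
    unfolding succ_feat_def by (rule traj_split[OF g01])
  define g where "g s = (SOME a. V s = r s + \<gamma> * V (T s a))" for s
  have gp: "V s = r s + \<gamma> * V (T s (g s))" for s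
    unfolding g_def using bell2[of s] by (rule someI_ex)
  define st where "st s = rec_nat s (\<lambda>_ x. T x (g x))" for s
  have st0: "st s 0 = s" and stS: "st s (Suc n) = T (st s n) (g (st s n))" for s n
    unfolding st_def by simp_all
  define asg where "asg s = (\<lambda>t. g (st s t))" for s
  have trg: "traj T s (asg s) t = st s t" for s t
    by (induction t) (simp_all add: st0 stS asg_def)
  have optg: "R s (asg s) = V s" for s
    by (rule opt) (simp only: trg stS, rule gp)
  have part1: "dispo_action N T phi \<gamma> w s (g s)" for s
  proof -
    let ?p0 = "succ_feat T phi \<gamma> s (asg s)"
    let ?p1 = "succ_feat T phi \<gamma> (T s (g s)) (\<lambda>t. asg s (Suc t))"
    have i0: "?p0 \<in> outcome_support N T phi \<gamma> s" by (simp add: supp)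
    have m: "\<forall>\<psi>'\<in>outcome_support N T phi \<gamma> s. w \<bullet> \<psi>' \<le> w \<bullet> ?p0"
    proof
      fix \<psi>' assume "\<psi>' \<in> outcome_support N T phi \<gamma> s"
      then obtain as where "\<psi>' = succ_feat T phi \<gamma> s as" by (auto simp: supp)
      then show "w \<bullet> \<psi>' \<le> w \<bullet> ?p0" by (simp add: inn optg Rle)
    qed
    have i1: "?p1 \<in> outcome_support N T phi \<gamma> (T s (g s))" by (simp add: supp)
    have e: "?p0 = phi s + \<gamma> *\<^sub>R ?p1"
      using sfsplit[of s "asg s"] by (simp add: asg_def st0)
    show ?thesis unfolding dispo_action_def
      using i0 m i1 e coverage[of s "g s"] by blast
  qed
  have part2: "R s as = V s" if da: "\<forall>t. dispo_action N T phi \<gamma> w (traj T s as t) (as t)" for s as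
  proof (rule opt)
    fix t
    let ?x = "traj T s as t" and ?a = "as t"
    obtain \<psi> where \<psi>: "\<psi> \<in> outcome_support N T phi \<gamma> ?x"
      and mx: "\<forall>\<psi>'\<in>outcome_support N T phi \<gamma> ?x. w \<bullet> \<psi>' \<le> w \<bullet> \<psi>"
      and ex: "\<exists>s'. N ?x ?a s' \<ge> 1 \<and> (\<exists>\<psi>'\<in>outcome_support N T phi \<gamma> s'. \<psi> = phi ?x + \<gamma> *\<^sub>R \<psi>')"
      using da unfolding dispo_action_def by blast
    then obtain s' \<psi>' where Ns: "N ?x ?a s' \<ge> 1" and \<psi>'s: "\<psi>' \<in> outcome_support N T phi \<gamma> s'"
      and eq: "\<psi> = phi ?x + \<gamma> *\<^sub>R \<psi>'" by blast
    have s': "s' = T ?x ?a" using data_from_mdp[OF Ns] .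
    obtain as1 where as1: "\<psi> = succ_feat T phi \<gamma> ?x as1" using \<psi> by (auto simp: supp)
    obtain as2 where as2: "\<psi>' = succ_feat T phi \<gamma> s' as2" using \<psi>'s by (auto simp: supp)
    have "w \<bullet> \<psi> \<le> V ?x" using Rle by (simp add: as1 inn)
    moreover have "V ?x \<le> w \<bullet> \<psi>"
    proof (rule Vle)
      fix as3 show "R ?x as3 \<le> w \<bullet> \<psi>" using mx by (auto simp: supp inn[symmetric])
    qed
    moreover have "w \<bullet> \<psi>' \<le> V s'" using Rle by (simp add: as2 inn)
    moreover have "w \<bullet> \<psi> = r ?x + \<gamma> * (w \<bullet> \<psi>')" by (simp add: eq r_def inner_add_right)
    moreover have "\<gamma> * (w \<bullet> \<psi>') \<le> \<gamma> * V s'"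
      using \<open>w \<bullet> \<psi>' \<le> V s'\<close> g01 by (intro mult_left_mono) auto
    ultimately have "V ?x \<le> r ?x + \<gamma> * V (T ?x ?a)"
      unfolding s'[symmetric] by linarith
    then show "V ?x = r ?x + \<gamma> * V (traj T s as (Suc t))"
      using bell1[of ?x ?a] by simp
  qed
  show ?thesis using part1 part2 unfolding R_def V_def r_def by blast
qed

end
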